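(* $\widehat{R}_{3/3,4}=-x^*\approx 3.287278452$, where $x^*$ is the smallest real root of \[ x^9+12x^8+60x^7+120x^6-144x^5-1152x^4-1536x^3+1152x^2+2304x-1536=0. \] (The class $\widehat{\Pi}_{3/3,4}$ consists of exactly three functions $\frac{a_3z^3+a_2z^2+a_1z+1}{(1-az)^3}$, with $a$ ranging over the three real roots of $24a^3-36a^2+12a-1=0$. The value $-x^*$ is attained for $a$ the smallest root, approximately $0.1289$.)
   Context: A real rational function $\psi$ is always considered in lowest terms, as a smooth function on $\mathbb{R}$ minus its finitely many poles. It is absolutely monotonic at $x\in\mathbb{R}$ if $x$ is not a pole and $\psi^{(k)}(x)\ge 0$ for all integers $k\ge 0$. The radius of absolute monotonicity is $R(\psi)=\sup\big(\{r\in[0,\infty): \psi \text{ is absolutely monotonic at each point of } [-r,0]\}\cup\{0\}\big)\in[0,+\infty]$. $\widehat{\Pi}_{s/s,p}$ denotes the set of real rational functions $\psi(z)=P(z)/(1-az)^s$ with $P$ a real polynomial of degree at most $s$ and $a\in\mathbb{R}$, such that $\psi(z)-e^z=O(z^{p+1})$ as $z\to0$. Finally, $\widehat{R}_{s/s,p}=\sup\{R(\psi):\psi\in\widehat{\Pi}_{s/s,p}\}$. *)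

theory Defs
  imports "HOL-Analysis.Analysis" "HOL-Computational_Algebra.Polynomial_Factorial" "HOL-Computational_Algebra.Field_as_Ring"
    "HOL-Library.Landau_Symbols"
begin

definition ratfun :: "real poly \<Rightarrow> real poly \<Rightarrow> real \<Rightarrow> real" where
  "ratfun P Q x = poly (P div gcd P Q) x / poly (Q div gcd P Q) x"

definition is_pole :: "real poly \<Rightarrow> real poly \<Rightarrow> real \<Rightarrow> bool" where
  "is_pole P Q x \<longleftrightarrow> poly (Q div gcd P Q) x = 0"

definition abs_mono_at :: "real poly \<Rightarrow> real poly \<Rightarrow> real \<Rightarrow> bool" where
  "abs_mono_at P Q x \<longleftrightarrow> \<not> is_pole P Q x \<and> (\<forall>k::nat. (deriv ^^ k) (ratfun P Q) x \<ge> 0)"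

definition radius_am :: "real poly \<Rightarrow> real poly \<Rightarrow> ereal" where
  "radius_am P Q = Sup (ereal ` {r. r \<ge> 0 \<and> (\<forall>x\<in>{-r..0}. abs_mono_at P Q x)} \<union> {0})"

definition den :: "real \<Rightarrow> nat \<Rightarrow> real poly" where
  "den a s = [:1, -a:] ^ s"

text \<open>The class of pairs (P, a) representing P(z)/(1-az)^s with deg P \<le> s and order p.\<close>
definition Pi_hat :: "nat \<Rightarrow> nat \<Rightarrow> (real poly \<times> real) set" where
  "Pi_hat s p = {(P, a). degree P \<le> s \<and>
     (\<lambda>z. ratfun P (den a s) z - exp z) \<in> O[at 0](\<lambda>z. z ^ (p + 1))}"

definition R_hat :: "nat \<Rightarrow> nat \<Rightarrow> ereal" where
  "R_hat s p = Sup ((\<lambda>(P, a). radius_am P (den a s)) ` Pi_hat s p)"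

end

theory Submission
  imports Defs "HOL-Real_Asymp.Real_Asymp"
begin

lemma ratfun_eq:
  assumes "poly Q x \<noteq> 0"
  shows "ratfun P Q x = poly P x / poly Q x" "\<not> is_pole P Q x"
proof -
  let ?g = "gcd P Q"
  have Q: "Q = (Q div ?g) * ?g" by simp
  have P: "P = (P div ?g) * ?g" by simp
  have "poly Q x = poly (Q div ?g) x * poly ?g x" by (metis Q poly_mult)
  with assms have h1: "poly (Q div ?g) x \<noteq> 0" and h2: "poly ?g x \<noteq> 0" by auto
  have "poly P x = poly (P div ?g) x * poly ?g x" by (metis P poly_mult)
  then show "ratfun P Q x = poly P x / poly Q x"
    using h1 h2 \<open>poly Q x = _\<close> by (simp add: ratfun_def)
  show "\<not> is_pole P Q x" using h1 by (simp add: is_pole_def)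
qed

lemma poly_den: "poly (den a s) x = (1 - a*x)^s"
  by (simp add: den_def poly_power algebra_simps)

lemma deriv_iter_cong:
  assumes "open S" "\<And>y. y \<in> S \<Longrightarrow> f y = g y" "x \<in> S"
  shows "(deriv ^^ k) f x = (deriv ^^ k) g x"
  using assms(3)
proof (induction k arbitrary: x)
  case 0
  then show ?case using assms(2) by simp
next
  case (Suc k)
  have ev: "eventually (\<lambda>y. y \<in> S) (nhds x)"
    using assms(1) Suc.prems by (rule eventually_nhds_in_open)
  have "eventually (\<lambda>y. (deriv ^^ k) f y = (deriv ^^ k) g y) (nhds x)"
    using ev by eventually_elim (rule Suc.IH)
  then have "deriv ((deriv ^^ k) f) x = deriv ((deriv ^^ k) g) x"
    by (rule deriv_cong_ev) simp
  then show ?case by simp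
qed

lemma deriv_term_aux:
  fixes u :: real assumes "u \<noteq> 0"
  shows "- (K * (of_nat (Suc n) * u^(Suc n - 1) * (0 - a*1))) / (u^(Suc n) * u^(Suc n))
        = K * (of_nat (Suc n) * a) / u^(Suc (Suc n))"
proof -
  have e: "u^(Suc n) * u^(Suc n) = u^n * u^(Suc (Suc n))"
    by (simp add: power_add[symmetric])
  have "u^n \<noteq> 0" using assms by simp
  then show ?thesis unfolding e using assms by (simp add: field_simps)
qed

lemma deriv_term:
  assumes "1 - a*x \<noteq> (0::real)"
  shows "((\<lambda>y. K / (1 - a*y)^m) has_real_derivative (K * (of_nat m * a) / (1 - a*x)^(Suc m))) (at x)"
proof -
  have "((\<lambda>y. K / (1 - a*y)^m) has_real_derivative
        (- (K * (of_nat m * (1 - a*x)^(m - 1) * (0 - a*1))) / ((1 - a*x)^m * (1 - a*x)^m))) (at x)"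
    using assms by (auto intro!: derivative_eq_intros)
  moreover have "- (K * (of_nat m * (1 - a*x)^(m - 1) * (0 - a*1))) / ((1 - a*x)^m * (1 - a*x)^m)
        = K * (of_nat m * a) / (1 - a*x)^(Suc m)"
  proof (cases m)
    case 0 then show ?thesis by simp
  next
    case (Suc n)
    show ?thesis unfolding Suc by (rule deriv_term_aux[OF assms])
  qed
  ultimately show ?thesis by simp
qed

definition cc :: "real \<Rightarrow> nat \<Rightarrow> real" where
  "cc a j = (if j = 0 then -21 + 96*a - 72*a^2 else if j = 1 then 84 - 384*a + 288*a^2
     else if j = 2 then -114 + 516*a - 384*a^2 else 52 - 228*a + 168*a^2)"

definition phi :: "real \<Rightarrow> nat \<Rightarrow> real \<Rightarrow> real" where
  "phi a k x = (\<Sum>j<4. cc a j * a^k * pochhammer (of_nat j) k / (1 - a*x)^(j+k))"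

lemma phi_deriv:
  assumes "1 - a*x \<noteq> 0"
  shows "(phi a k has_real_derivative phi a (Suc k) x) (at x)"
proof -
  have "((\<lambda>y. \<Sum>j<4. cc a j * a^k * pochhammer (of_nat j) k / (1 - a*y)^(j+k)) has_real_derivative
     (\<Sum>j<4. cc a j * a^k * pochhammer (of_nat j) k * (of_nat (j+k) * a) / (1 - a*x)^(Suc (j+k)))) (at x)"
    by (rule DERIV_sum) (rule deriv_term[OF assms])
  moreover have "(\<Sum>j<4. cc a j * a^k * pochhammer (of_nat j) k * (of_nat (j+k) * a) / (1 - a*x)^(Suc (j+k)))
      = phi a (Suc k) x"
    unfolding phi_def by (intro sum.cong refl) (simp add: pochhammer_Suc algebra_simps)
  ultimately show ?thesis by (simp add: phi_def[abs_def])
qed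

lemma phi_iter:
  assumes "a * x < 1"
  shows "(deriv ^^ k) (phi a 0) x = phi a k x"
  using assms
proof (induction k arbitrary: x)
  case 0 then show ?case by simp
next
  case (Suc k)
  have op: "open {y. a * y < (1::real)}"
    by (intro open_Collect_less continuous_intros)
  have "(deriv ^^ Suc k) (phi a 0) x = deriv ((deriv ^^ k) (phi a 0)) x" by simp
  also have "\<dots> = deriv (phi a k) x"
  proof (rule deriv_cong_ev)
    have "eventually (\<lambda>y. y \<in> {y. a * y < 1}) (nhds x)"
      using op Suc.prems by (intro eventually_nhds_in_open) auto
    then show "eventually (\<lambda>y. (deriv ^^ k) (phi a 0) y = phi a k y) (nhds x)"
      by eventually_elim (use Suc.IH in auto)
  qed simp
  also have "\<dots> = phi a (Suc k) x"
    using Suc.prems by (intro DERIV_imp_deriv phi_deriv) simp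
  finally show ?case .
qed

definition cub :: "real \<Rightarrow> real" where "cub a = 24*a^3 - 36*a^2 + 12*a - 1"

definition Pa :: "real \<Rightarrow> real poly" where
  "Pa a = [:1, 1 - 3*a, 1/2 - 3*a + 3*a^2, 1/6 - 3*a/2 + 3*a^2 - a^3:]"

lemma poly_Pa: "poly (Pa a) x = 1 + (1 - 3*a)*x + (1/2 - 3*a + 3*a^2)*x^2 + (1/6 - 3*a/2 + 3*a^2 - a^3)*x^3"
  by (simp add: Pa_def algebra_simps power2_eq_square power3_eq_cube)

lemma sum4: "(\<Sum>j<(4::nat). f j) = f 0 + f 1 + f 2 + (f 3::real)"
  by (simp add: numeral_eq_Suc)

lemma Pa_expand:
  assumes "cub a = 0"
  shows "poly (Pa a) x = cc a 0 * (1-a*x)^3 + cc a 1 * (1-a*x)^2 + cc a 2 * (1-a*x) + cc a 3"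
  using assms unfolding poly_Pa cc_def cub_def by simp algebra

lemma div_expand:
  fixes u :: real assumes "u \<noteq> 0"
  shows "(c0*u^3 + c1*u^2 + c2*u + c3)/u^3 = c0 + c1/u + c2/u^2 + c3/u^3"
proof -
  have "c0 + c1/u + c2/u^2 + c3/u^3 = (c0*u^3 + c1*u^2 + c2*u + c3)/u^3"
    using assms by (simp add: add_divide_distrib power2_eq_square power3_eq_cube)
  then show ?thesis by simp
qed

lemma phi0: "phi a 0 x = cc a 0 + cc a 1/(1-a*x) + cc a 2/(1-a*x)^2 + cc a 3/(1-a*x)^3"
  by (simp add: phi_def sum4)

lemma ratfun_Pa:
  assumes "cub a = 0" "a * x < 1"
  shows "ratfun (Pa a) (den a 3) x = phi a 0 x"
proof -
  have u: "1 - a*x > 0" using assms(2) by simp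
  have "ratfun (Pa a) (den a 3) x = poly (Pa a) x / (1 - a*x)^3"
    using ratfun_eq(1)[of "den a 3" x "Pa a"] u by (simp add: poly_den)
  also have "\<dots> = phi a 0 x"
    unfolding Pa_expand[OF assms(1)] phi0 using u by (intro div_expand) simp
  finally show ?thesis .
qed

lemma iter_Pa:
  assumes "cub a = 0" "a * x < 1"
  shows "(deriv ^^ k) (ratfun (Pa a) (den a 3)) x = phi a k x"
proof -
  have "(deriv ^^ k) (ratfun (Pa a) (den a 3)) x = (deriv ^^ k) (phi a 0) x"
  proof (rule deriv_iter_cong[of "{y. a * y < 1}"])
    show "open {y. a * y < (1::real)}" by (intro open_Collect_less continuous_intros)
    show "\<And>y. y \<in> {y. a * y < 1} \<Longrightarrow> ratfun (Pa a) (den a 3) y = phi a 0 y"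
      using ratfun_Pa assms(1) by auto
    show "x \<in> {y. a * y < 1}" using assms(2) by simp
  qed
  also have "\<dots> = phi a k x" by (rule phi_iter[OF assms(2)])
  finally show ?thesis .
qed

lemma not_pole_Pa:
  assumes "a * x < 1"
  shows "\<not> is_pole (Pa a) (den a 3) x"
  using assms by (intro ratfun_eq(2)) (simp add: poly_den)

definition G :: "real \<Rightarrow> nat \<Rightarrow> real \<Rightarrow> real" where
  "G a k w = cc a 1 + cc a 2 * (of_nat k + 1) * w + cc a 3 * ((of_nat k + 1) * (of_nat k + 2) / 2) * w^2"

lemma poch0: "pochhammer (0::real) (Suc k) = 0"
  by (simp add: pochhammer_0_left)
lemma poch1: "pochhammer (1::real) k = fact k"
  by (simp add: pochhammer_fact)
lemma poch2: "pochhammer (2::real) k = fact (Suc k)"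
proof (induction k)
  case 0 then show ?case by simp
next
  case (Suc k)
  have "pochhammer (2::real) (Suc k) = pochhammer 2 k * (2 + of_nat k)" by (rule pochhammer_Suc)
  also have "\<dots> = fact (Suc k) * (2 + of_nat k)" using Suc by simp
  also have "\<dots> = fact (Suc (Suc k))" by (simp only: fact_Suc[of "Suc k"]) (simp add: add.commute)
  finally show ?case .
qed
lemma poch3: "pochhammer (3::real) k = fact (Suc (Suc k)) / 2"
proof (induction k)
  case 0 then show ?case by simp
next
  case (Suc k)
  have "pochhammer (3::real) (Suc k) = pochhammer 3 k * (3 + of_nat k)" by (rule pochhammer_Suc)
  also have "\<dots> = fact (Suc (Suc k)) / 2 * (3 + of_nat k)" using Suc by simp
  also have "\<dots> = fact (Suc (Suc (Suc k))) / 2" by (simp only: fact_Suc[of "Suc (Suc k)"]) (simp add: add.commute)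
  finally show ?case .
qed

lemma phi_Suc:
  assumes "1 - a*x > 0"
  shows "phi a (Suc k) x = a^(Suc k) * fact (Suc k) * (1/(1-a*x))^(k+2) * G a (Suc k) (1/(1-a*x))"
proof -
  define w where "w = 1/(1-a*x)"
  have w4: "w^(4+k) = w*(w*(w*(w*w^k)))" by (simp add: power_add numeral_eq_Suc)
  have inv: "c/(1-a*x)^n = c * w^n" for c n by (simp add: w_def power_one_over divide_inverse power_inverse)
  have "phi a (Suc k) x = cc a 1 * a^(Suc k) * fact (Suc k) * w^(Suc (Suc k))
        + cc a 2 * a^(Suc k) * fact (Suc (Suc k)) * w^(Suc (Suc (Suc k)))
        + cc a 3 * a^(Suc k) * (fact (Suc (Suc (Suc k))) / 2) * w^(Suc (Suc (Suc (Suc k))))"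
    unfolding phi_def sum4 inv by (simp add: poch0 poch2 poch3 pochhammer_fact[symmetric] w4)
  also have "\<dots> = a^(Suc k) * fact (Suc k) * w^(k+2) * G a (Suc k) w"
    unfolding G_def by (simp add: power2_eq_square algebra_simps)
  finally show ?thesis by (simp add: w_def)
qed

lemma poly_bigo_zero:
  fixes b :: "nat \<Rightarrow> real"
  assumes "eventually (\<lambda>z. \<bar>\<Sum>i<n. b i * z^i\<bar> \<le> c * \<bar>z\<bar>^n) (at (0::real))"
  shows "\<forall>i<n. b i = 0"
  using assms
proof (induction n arbitrary: b c)
  case 0 then show ?case by simp
next
  case (Suc n)
  define g where "g z = (\<Sum>i<n. b (Suc i) * z^i)" for z :: real
  have split: "(\<Sum>i<Suc n. b i * z^i) = b 0 + z * g z" for z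
    unfolding g_def sum.lessThan_Suc_shift by (simp add: sum_distrib_left algebra_simps)
  have lim1: "((\<lambda>z. \<Sum>i<Suc n. b i * z^i) \<longlongrightarrow> b 0) (at (0::real))"
  proof -
    have cg: "(g \<longlongrightarrow> g 0) (at (0::real))" unfolding g_def by (intro tendsto_intros)
    have "((\<lambda>z. b 0 + z * g z) \<longlongrightarrow> b 0 + 0 * g 0) (at (0::real))"
      by (intro tendsto_intros cg)
    then show ?thesis unfolding split by simp
  qed
  have lim2: "((\<lambda>z. \<Sum>i<Suc n. b i * z^i) \<longlongrightarrow> 0) (at (0::real))"
  proof (rule Lim_null_comparison)
    show "eventually (\<lambda>z. norm (\<Sum>i<Suc n. b i * z^i) \<le> c * \<bar>z\<bar>^Suc n) (at (0::real))"
      using Suc.prems by simp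
    have "((\<lambda>z::real. c * \<bar>z\<bar>^Suc n) \<longlongrightarrow> c * \<bar>0\<bar>^Suc n) (at 0)"
      by (intro tendsto_intros)
    then show "((\<lambda>z::real. c * \<bar>z\<bar>^Suc n) \<longlongrightarrow> 0) (at 0)" by simp
  qed
  have b0: "b 0 = 0"
    using tendsto_unique[OF at_neq_bot lim1 lim2] .
  have ev: "eventually (\<lambda>z. \<bar>\<Sum>i<n. b (Suc i) * z^i\<bar> \<le> c * \<bar>z\<bar>^n) (at (0::real))"
  proof -
    have "eventually (\<lambda>z::real. z \<noteq> 0) (at 0)" by (simp add: eventually_at_filter)
    with Suc.prems show ?thesis
    proof eventually_elim
      case (elim z)
      have "\<bar>z\<bar> * \<bar>g z\<bar> \<le> \<bar>z\<bar> * (c * \<bar>z\<bar>^n)"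
        using elim(1) unfolding split b0 by (simp add: abs_mult algebra_simps)
      then have "\<bar>g z\<bar> \<le> c * \<bar>z\<bar>^n" using elim(2)
        by (simp add: mult_le_cancel_left_pos)
      then show ?case by (simp add: g_def)
    qed
  qed
  have "\<forall>i<n. b (Suc i) = 0" using Suc.IH[OF ev] .
  then show ?case using b0 by (auto simp: less_Suc_eq_0_disj)
qed

lemma poly_deg3: "degree (P::real poly) \<le> 3 \<Longrightarrow> poly P z = coeff P 0 + coeff P 1 * z + coeff P 2 * z^2 + coeff P 3 * z^3"
proof -
  assume d: "degree P \<le> 3"
  have "poly P z = (\<Sum>i\<le>degree P. coeff P i * z ^ i)" by (simp add: poly_altdef)
  also have "\<dots> = (\<Sum>i\<le>3. coeff P i * z ^ i)"
    by (rule sum.mono_neutral_left) (use d in \<open>auto simp: coeff_eq_0\<close>)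
  also have "\<dots> = coeff P 0 + coeff P 1 * z + coeff P 2 * z^2 + coeff P 3 * z^3"
    by (simp add: numeral_eq_Suc atMost_Suc)
  finally show ?thesis .
qed

definition E4 :: "real \<Rightarrow> real" where "E4 z = 1 + z + z^2/2 + z^3/6 + z^4/24"

lemma exp_E4: "(\<lambda>z. exp z - E4 z) \<in> O[at 0](\<lambda>z. z^5)"
  unfolding E4_def by real_asymp

lemma Q_pos: "eventually (\<lambda>z. (1 - a*z)^3 > (0::real)) (at 0)"
proof -
  have "((\<lambda>z::real. (1 - a*z)^3) \<longlongrightarrow> (1 - a*0)^3) (at 0)" by (intro tendsto_intros)
  then have "((\<lambda>z::real. (1 - a*z)^3) \<longlongrightarrow> 1) (at 0)" by simp
  from order_tendstoD(1)[OF this, of 0] show ?thesis by simp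
qed

lemma Q_bigo: "(\<lambda>z. (1 - a*z)^3) \<in> O[at (0::real)](\<lambda>_. 1)"
proof (rule bigoI_tendsto[where c = 1])
  have "((\<lambda>z::real. (1 - a*z)^3) \<longlongrightarrow> (1 - a*0)^3) (at 0)" by (intro tendsto_intros)
  then show "((\<lambda>z::real. (1 - a*z)^3 / 1) \<longlongrightarrow> 1) (at 0)" by simp
qed simp

lemma Qinv_bigo: "(\<lambda>z. 1 / (1 - a*z)^3) \<in> O[at (0::real)](\<lambda>_. 1)"
proof (rule bigoI_tendsto[where c = 1])
  have "((\<lambda>z::real. 1 / (1 - a*z)^3) \<longlongrightarrow> 1 / (1 - a*0)^3) (at 0)" by (intro tendsto_intros) simp
  then show "((\<lambda>z::real. 1 / (1 - a*z)^3 / 1) \<longlongrightarrow> 1) (at 0)" by simp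
qed simp

lemma mono_bigo: "(\<lambda>z::real. z^(5+j)) \<in> O[at 0](\<lambda>z. z^5)"
proof (rule bigoI[where c = 1])
  have "eventually (\<lambda>z::real. \<bar>z\<bar> < 1) (at 0)"
  proof -
    have "((\<lambda>z::real. \<bar>z\<bar>) \<longlongrightarrow> \<bar>0\<bar>) (at 0)" by (intro tendsto_intros)
    from order_tendstoD(2)[OF this, of 1] show ?thesis by simp
  qed
  then show "eventually (\<lambda>z::real. norm (z^(5+j)) \<le> 1 * norm (z^5)) (at 0)"
  proof eventually_elim
    case (elim z)
    have "\<bar>z\<bar>^j \<le> 1" using elim by (simp add: power_le_one)
    then have "\<bar>z\<bar>^5 * \<bar>z\<bar>^j \<le> \<bar>z\<bar>^5 * 1" by (intro mult_left_mono) simp_all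
    then show ?case by (simp add: power_add power_abs abs_mult)
  qed
qed

definition kk :: "real poly \<Rightarrow> real \<Rightarrow> nat \<Rightarrow> real" where
  "kk P a i = (if i = 0 then coeff P 0 - 1 else if i = 1 then coeff P 1 - (1 - 3*a)
     else if i = 2 then coeff P 2 - (1/2 - 3*a + 3*a^2)
     else if i = 3 then coeff P 3 - (1/6 - 3*a/2 + 3*a^2 - a^3)
     else - (1/24 - a/2 + 3*a^2/2 - a^3))"

definition TT :: "real \<Rightarrow> real \<Rightarrow> real" where
  "TT a z = (a/8 - a^2/2 + a^3/2) * z^5 + (a^3/6 - a^2/8) * z^6 + (a^3/24) * z^7"

lemma sum5: "(\<Sum>i<(5::nat). f i) = f 0 + f 1 + f 2 + f 3 + (f 4::real)"
  by (simp add: numeral_eq_Suc)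

lemma K_aux: "(p0::real) + p1 * z + p2 * z^2 + p3 * z ^ 3 - (1 + z + z^2 / 2 + z ^ 3 / 6 + z ^ 4 / 24) * (1 - a * z) ^ 3 =
     (p0 - 1) + (p1 - (1 - 3 * a)) * z + (p2 - (1 / 2 - 3 * a + 3 * a^2)) * z^2 +
      (p3 - (1 / 6 - 3 * a / 2 + 3 * a^2 - a ^ 3)) * z ^ 3 +
       (- (1 / 24 - a / 2 + 3 * a^2 / 2 - a^3)) * z ^ 4 +
        ((a / 8 - a^2 / 2 + a ^ 3 / 2) * z ^ 5 +
         (a ^ 3 / 6 - a^2 / 8) * z ^ 6 + (a ^ 3/24) * z ^ 7)"
  by (simp add: algebra_simps power2_eq_square power3_eq_cube eval_nat_numeral)

lemma K_decomp:
  assumes "degree P \<le> 3"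
  shows "poly P z - E4 z * (1 - a*z)^3 = (\<Sum>i<5. kk P a i * z^i) + TT a z"
proof -
  have "poly P z - E4 z * (1 - a*z)^3 = coeff P 0 + coeff P 1 * z + coeff P 2 * z^2 + coeff P 3 * z ^ 3
     - (1 + z + z^2 / 2 + z ^ 3 / 6 + z ^ 4 / 24) * (1 - a * z) ^ 3"
    by (simp only: poly_deg3[OF assms] E4_def)
  also note K_aux
  also have "(coeff P 0 - 1) + (coeff P 1 - (1 - 3 * a)) * z + (coeff P 2 - (1 / 2 - 3 * a + 3 * a^2)) * z^2 +
      (coeff P 3 - (1 / 6 - 3 * a / 2 + 3 * a^2 - a ^ 3)) * z ^ 3 +
       (- (1 / 24 - a / 2 + 3 * a^2 / 2 - a^3)) * z ^ 4 +
        ((a / 8 - a^2 / 2 + a ^ 3 / 2) * z ^ 5 +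
         (a ^ 3 / 6 - a^2 / 8) * z ^ 6 + (a ^ 3/24) * z ^ 7) = (\<Sum>i<5. kk P a i * z^i) + TT a z"
    by (simp only: sum5 kk_def TT_def) simp
  finally show ?thesis .
qed

lemma TT_bigo: "TT a \<in> O[at 0](\<lambda>z. z^5)"
proof -
  have h: "\<And>c j. (\<lambda>z::real. c * z^(5+j)) \<in> O[at 0](\<lambda>z. z^5)"
    using mono_bigo by simp
  have "(\<lambda>z. (a/8 - a^2/2 + a^3/2) * z^(5+0) + (a^3/6 - a^2/8) * z^(5+1) + (a^3/24) * z^(5+2))
        \<in> O[at 0](\<lambda>z. z^5)"
    by (intro sum_in_bigo h)
  then show ?thesis unfolding TT_def[abs_def] by simp
qed

lemma coeff_Pa:
  "coeff (Pa a) 0 = 1" "coeff (Pa a) 1 = 1 - 3*a" "coeff (Pa a) 2 = 1/2 - 3*a + 3*a^2"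
  "coeff (Pa a) 3 = 1/6 - 3*a/2 + 3*a^2 - a^3" "i > 3 \<Longrightarrow> coeff (Pa a) i = 0"
proof -
  show "coeff (Pa a) 0 = 1" "coeff (Pa a) 1 = 1 - 3*a" "coeff (Pa a) 2 = 1/2 - 3*a + 3*a^2"
    "coeff (Pa a) 3 = 1/6 - 3*a/2 + 3*a^2 - a^3" by (simp_all add: Pa_def numeral_eq_Suc)
  assume "i > 3"
  then have e: "i = Suc (Suc (Suc (Suc (i - 4))))" by simp
  show "coeff (Pa a) i = 0" by (subst e) (simp add: Pa_def)
qed

lemma degree_Pa: "degree (Pa a) \<le> 3"
  by (rule degree_le) (simp add: coeff_Pa)

lemma alg1: "((r::real) - e) * Q + (e - E) * Q = r * Q - E * Q"
  by (simp add: algebra_simps)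
lemma alg2: "(Q::real) \<noteq> 0 \<Longrightarrow> ((p - E * Q) - (e - E) * Q) * (1 / Q) = p / Q - e"
  by (simp add: field_simps)
lemma ratfun_den3: "(1 - a*z)^3 > 0 \<Longrightarrow> ratfun P (den a 3) z = poly P z / (1 - a*z)^3"
  using ratfun_eq(1)[of "den a 3" z P] by (simp add: poly_den)

lemma Pi_hat_char: "(P, a) \<in> Pi_hat 3 4 \<longleftrightarrow> cub a = 0 \<and> P = Pa a"
proof
  assume "(P, a) \<in> Pi_hat 3 4"
  then have deg: "degree P \<le> 3"
    and H: "(\<lambda>z. ratfun P (den a 3) z - exp z) \<in> O[at 0](\<lambda>z. z ^ 5)"
    by (simp_all add: Pi_hat_def)
  have H1: "(\<lambda>z. (ratfun P (den a 3) z - exp z) * (1 - a*z)^3) \<in> O[at 0](\<lambda>z. z ^ 5)"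
    by (rule landau_mult_1_trans(7)[OF H Q_bigo])
  have H2: "(\<lambda>z. (exp z - E4 z) * (1 - a*z)^3) \<in> O[at 0](\<lambda>z. z ^ 5)"
    by (rule landau_mult_1_trans(7)[OF exp_E4 Q_bigo])
  have mem: "(\<lambda>z. (ratfun P (den a 3) z - exp z) * (1 - a*z)^3 + (exp z - E4 z) * (1 - a*z)^3)
      \<in> O[at 0](\<lambda>z. z ^ 5)" by (rule sum_in_bigo(1)[OF H1 H2])
  have ev: "eventually (\<lambda>z. (ratfun P (den a 3) z - exp z) * (1 - a*z)^3 + (exp z - E4 z) * (1 - a*z)^3
      = poly P z - E4 z * (1 - a*z)^3) (at 0)"
    using Q_pos[of a]
  proof eventually_elim
    case (elim z)
    have q: "(1 - a*z)^3 \<noteq> 0" using elim by simp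
    have r: "ratfun P (den a 3) z * (1 - a*z)^3 = poly P z"
      using ratfun_den3[OF elim] q by simp
    show ?case by (simp only: alg1 r)
  qed
  have K: "(\<lambda>z. poly P z - E4 z * (1 - a*z)^3) \<in> O[at 0](\<lambda>z. z ^ 5)"
    using iffD1[OF landau_o.big.in_cong[OF ev] mem] .
  have "(\<lambda>z. (poly P z - E4 z * (1 - a*z)^3) - TT a z) \<in> O[at 0](\<lambda>z. z ^ 5)"
    by (rule sum_in_bigo(2)[OF K TT_bigo])
  then have hd: "(\<lambda>z. \<Sum>i<5. kk P a i * z^i) \<in> O[at 0](\<lambda>z. z ^ 5)"
    by (simp add: K_decomp[OF deg])
  obtain c where "eventually (\<lambda>z. norm (\<Sum>i<5. kk P a i * z^i) \<le> c * norm (z^5)) (at (0::real))"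
    using landau_o.bigE[OF hd] by metis
  then have "eventually (\<lambda>z. \<bar>\<Sum>i<5. kk P a i * z^i\<bar> \<le> c * \<bar>z\<bar>^5) (at (0::real))"
    by (simp add: power_abs)
  from poly_bigo_zero[OF this] have z: "\<And>i. i < 5 \<Longrightarrow> kk P a i = 0" by blast
  have c: "cub a = 0" using z[of 4] by (simp add: kk_def cub_def algebra_simps)
  have "P = Pa a"
  proof (rule poly_eqI)
    fix n
    show "coeff P n = coeff (Pa a) n"
    proof (cases "n > 3")
      case True
      then show ?thesis using deg by (simp add: coeff_Pa coeff_eq_0)
    next
      case False
      then have "n = 0 \<or> n = 1 \<or> n = 2 \<or> n = 3" by auto
      then show ?thesis using z[of 0] z[of 1] z[of 2] z[of 3] by (auto simp: kk_def coeff_Pa coeff_Pa(2)[simplified])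
    qed
  qed
  with c show "cub a = 0 \<and> P = Pa a" by simp
next
  assume "cub a = 0 \<and> P = Pa a"
  then have c: "cub a = 0" and P: "P = Pa a" by auto
  have z: "kk P a i = 0" if "i < 5" for i
  proof -
    from that have "i = 0 \<or> i = 1 \<or> i = 2 \<or> i = 3 \<or> i = 4" by auto
    then show ?thesis using c unfolding P by (auto simp: kk_def coeff_Pa coeff_Pa(2)[simplified] cub_def algebra_simps)
  qed
  have K: "(\<lambda>z. poly P z - E4 z * (1 - a*z)^3) \<in> O[at 0](\<lambda>z. z ^ 5)"
    using TT_bigo[of a] by (simp add: K_decomp[OF degree_Pa[of a, folded P]] z)
  have "(\<lambda>z. (poly P z - E4 z * (1 - a*z)^3) - (exp z - E4 z) * (1 - a*z)^3) \<in> O[at 0](\<lambda>z. z ^ 5)"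
    by (rule sum_in_bigo(2)[OF K landau_mult_1_trans(7)[OF exp_E4 Q_bigo]])
  then have mem: "(\<lambda>z. ((poly P z - E4 z * (1 - a*z)^3) - (exp z - E4 z) * (1 - a*z)^3) * (1 / (1 - a*z)^3))
      \<in> O[at 0](\<lambda>z. z ^ 5)"
    by (rule landau_mult_1_trans(7)[OF _ Qinv_bigo])
  have ev: "eventually (\<lambda>z. ((poly P z - E4 z * (1 - a*z)^3) - (exp z - E4 z) * (1 - a*z)^3) * (1 / (1 - a*z)^3)
     = ratfun P (den a 3) z - exp z) (at 0)"
    using Q_pos[of a]
  proof eventually_elim
    case (elim z)
    have q: "(1 - a*z)^3 \<noteq> 0" using elim by simp
    show ?case by (simp only: alg2[OF q] ratfun_den3[OF elim])
  qed
  have "(\<lambda>z. ratfun P (den a 3) z - exp z) \<in> O[at 0](\<lambda>z. z ^ 5)"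
    using iffD1[OF landau_o.big.in_cong[OF ev] mem] .
  then show "(P, a) \<in> Pi_hat 3 4"
    unfolding Pi_hat_def using degree_Pa[of a] P by simp
qed

lemma sq_bounds: "0 \<le> L \<Longrightarrow> L \<le> a \<Longrightarrow> a \<le> U \<Longrightarrow> L^2 \<le> a^2 \<and> a^2 \<le> (U::real)^2"
  by (auto intro: power_mono)
lemma cube_bounds: "0 \<le> L \<Longrightarrow> L \<le> a \<Longrightarrow> a \<le> U \<Longrightarrow> L^3 \<le> a^3 \<and> a^3 \<le> (U::real)^3"
  by (auto intro: power_mono)

lemma cub_rel: "cub a = 0 \<Longrightarrow> 24*a^3 = 36*a^2 - 12*a + 1"
  by (simp add: cub_def)
lemma cub_rel4: "cub a = 0 \<Longrightarrow> 24*a^4 = 36*a^3 - 12*a^2 + a"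
  unfolding cub_def by algebra

lemma isCont_cub: "isCont cub x"
  unfolding cub_def[abs_def] by (intro continuous_intros)

lemma a1_ex: "\<exists>a. 128886/10^6 \<le> a \<and> a \<le> 128887/10^6 \<and> cub a = 0"
proof -
  have "cub (128886/10^6) \<le> 0" "0 \<le> cub (128887/10^6)" by (simp_all add: cub_def power2_eq_square power3_eq_cube)
  then show ?thesis using IVT[of cub "128886/10^6" 0 "128887/10^6"] isCont_cub by auto
qed

lemma a2_ex: "\<exists>a. 302534/10^6 \<le> a \<and> a \<le> 302535/10^6 \<and> cub a = 0"
proof -
  have "cub (302535/10^6) \<le> 0" "0 \<le> cub (302534/10^6)" by (simp_all add: cub_def power2_eq_square power3_eq_cube)
  then show ?thesis using IVT2[of cub "302535/10^6" 0 "302534/10^6"] isCont_cub by auto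
qed

lemma roots3:
  assumes "cub a = 0" "cub a1 = 0" "cub a2 = 0" "a1 \<noteq> a2"
  shows "a = a1 \<or> a = a2 \<or> a = 3/2 - a1 - a2"
proof -
  define Q where "Q x y = 24*(x^2 + x*y + y^2) - 36*(x + y) + 12" for x y :: real
  have f: "cub x - cub y = (x - y) * Q x y" for x y unfolding cub_def Q_def by algebra
  have g: "Q x y - Q z y = (x - z) * (24*(x + z + y) - 36)" for x y z unfolding Q_def by algebra
  have q2: "Q a2 a1 = 0" using f[of a2 a1] assms by simp
  show ?thesis
  proof (cases "a = a1")
    case False
    then have "Q a a1 = 0" using f[of a a1] assms by simp
    then have "(a - a2) * (24*(a + a2 + a1) - 36) = 0" using g[of a a1 a2] q2 by simp
    then show ?thesis by auto
  qed simp
qed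

lemma a1_facts:
  assumes "128886/10^6 \<le> a" "a \<le> 128887/10^6" "cub a = 0"
  shows "poly (Pa a) (-329/100) < 0" "poly (Pa a) (-328/100) > 0"
    "3929/100 \<le> cc a 1" "-5388/100 \<le> cc a 2" "cc a 2 \<le> -5387/100" "2540/100 \<le> cc a 3"
    "0 < 1/8 - a + 3/2*a^2" "0 < 3*(1-3*a)*(1/8 - a + 3/2*a^2) - (1/2 - 3*a + 3*a^2)^2"
proof -
  note s = sq_bounds[OF _ assms(1,2)] cube_bounds[OF _ assms(1,2)]
  note r = cub_rel[OF assms(3)] cub_rel4[OF assms(3)]
  have e1: "poly (Pa a) (-329/100) = (-16878989/6000000) + (61629267/2000000)*a + (-74361567/1000000)*a^2 + (35611289/1000000)*a^3"
    unfolding poly_Pa by (simp add: field_simps power2_eq_square power3_eq_cube)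
  have e2: "poly (Pa a) (-328/100) = (-130409/46875) + (476502/15625)*a + (-1149804/15625)*a^2 + (551368/15625)*a^3"
    unfolding poly_Pa by (simp add: field_simps power2_eq_square power3_eq_cube)
  have e3: "3*(1-3*a)*(1/8 - a + 3/2*a^2) - (1/2 - 3*a + 3*a^2)^2 = (1/8) + (-9/8)*a + (3/2)*a^2 + (9/2)*a^3 + (-9)*a^4"
    by (simp add: field_simps power2_eq_square power3_eq_cube power4_eq_xxxx)
  show "poly (Pa a) (-329/100) < 0" unfolding e1 using s r by (simp add: power2_eq_square power3_eq_cube power4_eq_xxxx)
  show "poly (Pa a) (-328/100) > 0" unfolding e2 using s r by (simp add: power2_eq_square power3_eq_cube power4_eq_xxxx)
  show "3929/100 \<le> cc a 1" "-5388/100 \<le> cc a 2" "cc a 2 \<le> -5387/100" "2540/100 \<le> cc a 3"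
    using s assms unfolding cc_def by (simp_all add: power2_eq_square power3_eq_cube)
  show "0 < 1/8 - a + 3/2*a^2" using s assms by (simp add: power2_eq_square power3_eq_cube)
  show "0 < 3*(1-3*a)*(1/8 - a + 3/2*a^2) - (1/2 - 3*a + 3*a^2)^2" unfolding e3 using s r assms by (simp add: power2_eq_square power3_eq_cube power4_eq_xxxx)
qed

lemma a2_facts:
  assumes "302534/10^6 \<le> a" "a \<le> 302535/10^6"
  shows "cc a 1 + 21 * cc a 2 + 231 * cc a 3 < 0"
  using sq_bounds[OF _ assms] assms unfolding cc_def by (simp add: power2_eq_square)

lemma a3_facts:
  assumes "1068578/10^6 \<le> a" "a \<le> 1068580/10^6" "cub a = 0"
  shows "cc a 1 * (1+a)^2 + 11 * cc a 2 * (1+a) + 66 * cc a 3 < 0"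
proof -
  note s = sq_bounds[OF _ assms(1,2)] cube_bounds[OF _ assms(1,2)]
  note r = cub_rel[OF assms(3)] cub_rel4[OF assms(3)]
  have e: "cc a 1 * (1+a)^2 + 11 * cc a 2 * (1+a) + 66 * cc a 3 = (2262) + (-10842)*a + (12144)*a^2 + (-4032)*a^3 + (288)*a^4"
    unfolding cc_def by (simp add: field_simps power2_eq_square power3_eq_cube power4_eq_xxxx)
  show ?thesis unfolding e using s r assms by (simp add: power2_eq_square power3_eq_cube power4_eq_xxxx)
qed

definition NN :: "real \<Rightarrow> real" where
  "NN y = y^9 + 12*y^8 + 60*y^7 + 120*y^6 - 144*y^5 - 1152*y^4 - 1536*y^3 + 1152*y^2 + 2304*y - 1536"

definition dNN :: "real \<Rightarrow> real" where
  "dNN y = 9*y^8 + 96*y^7 + 420*y^6 + 720*y^5 - 720*y^4 - 4608*y^3 - 4608*y^2 + 2304*y + 2304"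

lemma NN_shift: "NN (-329/100 - s) = (-7271529773486057369/1000000000000000000) + (-26884236869746544649/10000000000000000)* s + (-152790092224717281/25000000000000)* s^2 + (-1526365765818741/250000000000)* s^3 + (-21180739654887/5000000000)* s^4 + (-97854176703/50000000)* s^5 + (-154062669/250000)* s^6 + (-334569/2500)* s^7 + (-1761/100)* s^8 + (-1)* s^9"
  unfolding NN_def by algebra

lemma dNN_shift: "dNN (-329/100 + s) = (26884236869746544649/10000000000000000) + (-152790092224717281/12500000000000)* s + (4579097297456223/250000000000)* s^2 + (-21180739654887/1250000000)* s^3 + (97854176703/10000000)* s^4 + (-462188007/125000)* s^5 + (2341983/2500)* s^6 + (-3522/25)* s^7 + (9)* s^8"
  unfolding dNN_def by algebra

lemma NN_neg: assumes "y \<le> -329/100" shows "NN y < 0"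
proof -
  define s where "s = -329/100 - y"
  have s0: "0 \<le> s" using assms by (simp add: s_def)
  have y: "y = -329/100 - s" by (simp add: s_def)
  have p: "0 \<le> s^2" "0 \<le> s^3" "0 \<le> s^4" "0 \<le> s^5" "0 \<le> s^6" "0 \<le> s^7" "0 \<le> s^8" "0 \<le> s^9"
    using s0 by simp_all
  show ?thesis unfolding y NN_shift using s0 p by linarith
qed

lemma dNN_pos: assumes "-329/100 \<le> y" "y \<le> -328/100" shows "dNN y > 0"
proof -
  define s where "s = y + 329/100"
  have s0: "0 \<le> s" "s \<le> 1/100" using assms by (simp_all add: s_def)
  have y: "y = -329/100 + s" by (simp add: s_def)
  have p: "0 \<le> s^n" "s^n \<le> (1/100)^n" for n
    using s0 by (simp_all add: power_mono)
  have v: "(1/100::real)^2 = 1/10000" "(1/100::real)^3 = 1/1000000" "(1/100::real)^4 = 1/100000000"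
    "(1/100::real)^5 = 1/10000000000" "(1/100::real)^6 = 1/1000000000000" "(1/100::real)^7 = 1/100000000000000"
    "(1/100::real)^8 = 1/10000000000000000" by (simp_all add: power_one_over)
  note pp = p[of 2] p[of 3] p[of 4] p[of 5] p[of 6] p[of 7] p[of 8]
  show ?thesis unfolding y dNN_shift using s0 pp v by linarith
qed

lemma NN_deriv: "(NN has_real_derivative dNN y) (at y)"
  unfolding NN_def[abs_def] dNN_def by (auto intro!: derivative_eq_intros simp: algebra_simps)

lemma NN_mono: assumes "-329/100 \<le> x" "x < y" "y \<le> -328/100" shows "NN x < NN y"
  by (rule DERIV_pos_imp_increasing[OF assms(2)])
     (use assms dNN_pos NN_deriv in \<open>force\<close>)

lemma NN_root: "cub a = 0 \<Longrightarrow> poly (Pa a) x = 0 \<Longrightarrow> NN x = 0"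
  unfolding cub_def poly_Pa NN_def by algebra

lemma quad_mono:
  fixes c1 c2 c3 K1 K2 w :: real
  assumes "0 \<le> K2" "0 \<le> c3" "7/10 \<le> w"
    "0 \<le> K1*c2 + K2*c3*(14/10)" "0 \<le> c1 + K1*c2*(7/10) + K2*c3*(49/100)"
  shows "0 \<le> c1 + K1*c2*w + K2*c3*w^2"
proof -
  have e: "c1 + K1*c2*w + K2*c3*w^2 = (c1 + K1*c2*(7/10) + K2*c3*(49/100)) + (w - 7/10) * (K1*c2 + K2*c3*(w + 7/10))"
    by algebra
  have "K2*c3*(14/10) \<le> K2*c3*(w + 7/10)"
    using assms by (intro mult_left_mono) auto
  then have "0 \<le> K1*c2 + K2*c3*(w + 7/10)" using assms(4) by linarith
  then have "0 \<le> (w - 7/10) * (K1*c2 + K2*c3*(w + 7/10))" using assms(3) by simp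
  then show ?thesis unfolding e using assms(5) by linarith
qed

lemma G_ident: "c1 + c2 * (K + 1) * w + c3 * ((K + 1) * (K + 2) / 2) * w^2
      = c1 + ((K + 1) * w) * (c2 + ((K + 2) / 2) * (c3 * (w::real)))"
proof -
  define h where "h = (K + 2) / 2"
  have hd: "(K + 1) * (K + 2) / 2 = (K + 1) * h" by (simp add: h_def)
  have "c1 + c2 * (K + 1) * w + c3 * ((K + 1) * h) * w^2 = c1 + ((K + 1) * w) * (c2 + h * (c3 * w))"
    by (simp add: algebra_simps power2_eq_square)
  then show ?thesis unfolding hd h_def .
qed

lemma G_nonneg:
  fixes c1 c2 c3 w :: real and k :: nat
  assumes c: "3929/100 \<le> c1" "-5388/100 \<le> c2" "c2 \<le> 0" "2540/100 \<le> c3" and w: "7/10 \<le> w" and k: "1 \<le> k"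
  shows "0 \<le> c1 + c2 * (of_nat k + 1) * w + c3 * ((of_nat k + 1) * (of_nat k + 2) / 2) * w^2"
proof -
  consider "k = 1" | "k = 2" | "k = 3" | "k = 4" | "k \<ge> 5" using k by linarith
  then show ?thesis
  proof cases
    case 1
    have e: "3*c3*(c1 + 2*c2*w + 3*c3*w^2) = (3*c3*w + c2)^2 + (3*(c1*c3) - c2^2)"
      by algebra
    have h1: "(3929/100)*(2540/100) \<le> c1*c3" using c by (intro mult_mono) auto
    have h2: "(-c2)^2 \<le> (5388/100)^2" using c by (intro power_mono) auto
    have h3: "((5388/100)::real)^2 = 29030544/10000" "(-c2)^2 = c2^2" by (simp_all add: power2_eq_square)
    have "0 < 3*(c1*c3) - c2^2" using h1 h2 h3 by linarith
    then have "0 < 3*c3*(c1 + 2*c2*w + 3*c3*w^2)" unfolding e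
      by (metis add_nonneg_pos zero_le_power2)
    then have "0 < c1 + 2*c2*w + 3*c3*w^2" using c by (simp add: zero_less_mult_iff)
    then show ?thesis using 1 by (simp add: algebra_simps)
  next
    case 2
    have "0 \<le> c1 + 3*c2*w + 6*c3*w^2"
      by (rule quad_mono) (use c w in linarith)+
    then show ?thesis using 2 by (simp add: algebra_simps)
  next
    case 3
    have "0 \<le> c1 + 4*c2*w + 10*c3*w^2"
      by (rule quad_mono) (use c w in linarith)+
    then show ?thesis using 3 by (simp add: algebra_simps)
  next
    case 4
    have "0 \<le> c1 + 5*c2*w + 15*c3*w^2"
      by (rule quad_mono) (use c w in linarith)+
    then show ?thesis using 4 by (simp add: algebra_simps)
  next
    case 5
    have e: "c1 + c2 * (of_nat k + 1) * w + c3 * ((of_nat k + 1) * (of_nat k + 2) / 2) * w^2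
      = c1 + ((of_nat k + 1) * w) * (c2 + ((of_nat k + 2) / 2) * (c3 * w))"
      by (rule G_ident)
    have h1: "2540/100 * (7/10) \<le> c3 * w" using c w by (intro mult_mono) auto
    have h2: "7/2 \<le> ((of_nat k + 2) / 2 :: real)" using 5 by simp
    have "7/2 * (2540/100 * (7/10)) \<le> ((of_nat k + 2) / 2) * (c3 * w)"
      by (rule mult_mono[OF h2 h1]) (use c w in auto)
    then have "0 \<le> c2 + ((of_nat k + 2) / 2) * (c3 * w)" using c by linarith
    moreover have "0 \<le> (of_nat k + 1) * w" using w by simp
    ultimately have "0 \<le> ((of_nat k + 1) * w) * (c2 + ((of_nat k + 2) / 2) * (c3 * w))" by simp
    then show ?thesis unfolding e using c by linarith
  qed
qed

lemma Pa_deriv: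
  "(poly (Pa a) has_real_derivative ((1-3*a) + 2*(1/2-3*a+3*a^2)*x + 3*(1/6-3*a/2+3*a^2-a^3)*x^2)) (at x)"
proof -
  have eq: "poly (Pa a) = (\<lambda>x. 1 + (1 - 3*a)*x + (1/2 - 3*a + 3*a^2)*x^2 + (1/6 - 3*a/2 + 3*a^2 - a^3)*x^3)"
    by (rule ext) (rule poly_Pa)
  show ?thesis unfolding eq by (auto intro!: derivative_eq_intros simp: algebra_simps)
qed

lemma Pa_incr:
  assumes "cub a = 0" "0 < 1/8 - a + 3/2*a^2" "0 < 3*(1-3*a)*(1/8 - a + 3/2*a^2) - (1/2 - 3*a + 3*a^2)^2"
    "x < y"
  shows "poly (Pa a) x < poly (Pa a) y"
proof (rule DERIV_pos_imp_increasing[OF assms(4)])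
  fix t
  define q where "q = 1/8 - a + 3/2*a^2"
  have p3: "1/6-3*a/2+3*a^2-a^3 = q" using cub_rel[OF assms(1)] by (simp add: q_def)
  let ?d = "(1-3*a) + 2*(1/2-3*a+3*a^2)*t + 3*q*t^2"
  have e: "3*q*?d = (3*q*t + (1/2-3*a+3*a^2))^2 + (3*(1-3*a)*q - (1/2 - 3*a + 3*a^2)^2)"
    by algebra
  have "0 < 3*q*?d" unfolding e using assms(3) unfolding q_def
    by (metis add_nonneg_pos zero_le_power2)
  then have "0 < ?d" using assms(2) unfolding q_def by (simp add: zero_less_mult_iff)
  then show "\<exists>d. (poly (Pa a) has_real_derivative d) (at t) \<and> 0 < d"
    using Pa_deriv[of a t] unfolding p3 by blast
qed

lemma radius_le:
  assumes "x0 \<le> 0" "\<not> abs_mono_at P Q x0"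
  shows "radius_am P Q \<le> ereal (-x0)"
  unfolding radius_am_def
proof (rule Sup_least)
  fix y assume "y \<in> ereal ` {r. r \<ge> 0 \<and> (\<forall>x\<in>{-r..0}. abs_mono_at P Q x)} \<union> {0}"
  then obtain r where y: "y = ereal r"
    and r: "r \<in> {r. r \<ge> 0 \<and> (\<forall>x\<in>{-r..0}. abs_mono_at P Q x)} \<union> {0}"
    by (auto simp: zero_ereal_def)
  have "r \<le> -x0"
  proof (rule ccontr)
    assume nr: "\<not> r \<le> -x0"
    then have "x0 \<in> {-r..0}" using assms(1) by auto
    moreover from r nr assms(1) have "\<forall>x\<in>{-r..0}. abs_mono_at P Q x" by auto
    ultimately show False using assms(2) by blast
  qed
  then show "y \<le> ereal (-x0)" using y by simp
qed

lemma radius_eq: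
  assumes "xi \<le> 0" "\<And>x. xi \<le> x \<Longrightarrow> x \<le> 0 \<Longrightarrow> abs_mono_at P Q x"
    "\<And>x. x < xi \<Longrightarrow> \<not> abs_mono_at P Q x"
  shows "radius_am P Q = ereal (-xi)"
  unfolding radius_am_def
proof (rule Sup_eqI)
  fix y assume "y \<in> ereal ` {r. r \<ge> 0 \<and> (\<forall>x\<in>{-r..0}. abs_mono_at P Q x)} \<union> {0}"
  then obtain r where y: "y = ereal r"
    and r: "r \<in> {r. r \<ge> 0 \<and> (\<forall>x\<in>{-r..0}. abs_mono_at P Q x)} \<union> {0}"
    by (auto simp: zero_ereal_def)
  have "r \<le> -xi"
  proof (rule ccontr)
    assume nr: "\<not> r \<le> -xi"
    then have "-r \<in> {-r..0}" "-r < xi" using assms(1) by auto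
    moreover from r nr assms(1) have "\<forall>x\<in>{-r..0}. abs_mono_at P Q x" by auto
    ultimately show False using assms(3) by blast
  qed
  then show "y \<le> ereal (-xi)" using y by simp
next
  fix y assume ub: "\<And>z. z \<in> ereal ` {r. r \<ge> 0 \<and> (\<forall>x\<in>{-r..0}. abs_mono_at P Q x)} \<union> {0} \<Longrightarrow> z \<le> y"
  have "-xi \<in> {r. r \<ge> 0 \<and> (\<forall>x\<in>{-r..0}. abs_mono_at P Q x)}" using assms(1,2) by auto
  then show "ereal (-xi) \<le> y" using ub by blast
qed

lemma am_a1:
  assumes a: "128886/10^6 \<le> a" "a \<le> 128887/10^6" "cub a = 0"
    and xi: "poly (Pa a) xi = 0" "-329/100 \<le> xi"
  shows am_a1_pos: "xi \<le> x \<Longrightarrow> x \<le> 0 \<Longrightarrow> abs_mono_at (Pa a) (den a 3) x"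
    and am_a1_neg: "x < xi \<Longrightarrow> \<not> abs_mono_at (Pa a) (den a 3) x"
proof -
  note f = a1_facts[OF a]
  have apos: "0 < a" using a(1) by simp
  have mono: "\<And>u v. u < v \<Longrightarrow> poly (Pa a) u < poly (Pa a) v"
    using Pa_incr[OF a(3) f(7) f(8)] by blast
  show "abs_mono_at (Pa a) (den a 3) x" if x: "xi \<le> x" "x \<le> 0"
  proof -
    have ax0: "a * x \<le> 0" using apos x(2) by (simp add: mult_nonneg_nonpos)
    then have ax: "a * x < 1" by simp
    have u: "1 - a*x > 0" using ax by simp
    have u3: "(1 - a*x)^3 > 0" using u by simp
    have p: "poly (Pa a) x \<ge> 0" using mono[of xi x] x xi by (cases "xi = x") auto
    have "a * (-329/100) \<le> a * x" using apos x xi by (intro mult_left_mono) auto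
    then have h1: "-(329/100) * a \<le> a * x" by (simp add: mult.commute)
    have h2: "a \<le> 128887/1000000" using a(2) by simp
    have h3: "7/10 * (1 - a*x) = 7/10 - 7/10 * (a*x)" by (simp only: right_diff_distrib mult_1_right)
    have "7/10 * (1 - a*x) \<le> 1" unfolding h3 using h1 h2 by linarith
    then have wlo: "7/10 \<le> 1/(1 - a*x)" using u by (simp add: le_divide_eq)
    show ?thesis
      unfolding abs_mono_at_def
    proof (intro conjI allI)
      show "\<not> is_pole (Pa a) (den a 3) x" by (rule not_pole_Pa[OF ax])
      fix k
      show "(deriv ^^ k) (ratfun (Pa a) (den a 3)) x \<ge> 0"
      proof (cases k)
        case 0
        have "(deriv ^^ k) (ratfun (Pa a) (den a 3)) x = poly (Pa a) x / (1-a*x)^3"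
          using 0 ratfun_den3[OF u3] by simp
        then show ?thesis using p u3 by simp
      next
        case (Suc m)
        have "(deriv ^^ k) (ratfun (Pa a) (den a 3)) x = phi a k x" by (rule iter_Pa[OF a(3) ax])
        also have "\<dots> = a^(Suc m) * fact (Suc m) * (1/(1-a*x))^(m+2) * G a (Suc m) (1/(1-a*x))"
          using Suc phi_Suc[OF u] by simp
        finally have e: "(deriv ^^ k) (ratfun (Pa a) (den a 3)) x = 
            a^(Suc m) * fact (Suc m) * (1/(1-a*x))^(m+2) * G a (Suc m) (1/(1-a*x))" .
        have g: "0 \<le> G a (Suc m) (1/(1-a*x))"
          unfolding G_def by (rule G_nonneg) (use f wlo in auto)
        have h: "0 \<le> a^(Suc m) * fact (Suc m) * (1/(1-a*x))^(m+2)" using apos u by simp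
        show ?thesis unfolding e by (rule mult_nonneg_nonneg[OF h g])
      qed
    qed
  qed
  show "\<not> abs_mono_at (Pa a) (den a 3) x" if x: "x < xi"
  proof
    assume am: "abs_mono_at (Pa a) (den a 3) x"
    have "xi < -328/100"
    proof (rule ccontr)
      assume "\<not> xi < -328/100"
      then have "-328/100 = xi \<or> -328/100 < xi" by auto
      then show False using mono[of "-328/100" xi] f(2) xi by auto
    qed
    then have "x < 0" using x by simp
    then have ax: "a * x < 1" using apos by (smt (verit) mult_pos_neg)
    have u3: "(1 - a*x)^3 > 0" using ax by simp
    have p: "poly (Pa a) x < 0" using mono[OF x] xi by simp
    have "(deriv ^^ 0) (ratfun (Pa a) (den a 3)) x = poly (Pa a) x / (1-a*x)^3"
      using ratfun_den3[OF u3] by simp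
    moreover have "poly (Pa a) x / (1-a*x)^3 < 0" using p u3 by (simp add: divide_neg_pos)
    ultimately show False using am unfolding abs_mono_at_def by (metis not_le)
  qed
qed

lemma am_a2:
  assumes "302534/10^6 \<le> a" "a \<le> 302535/10^6" "cub a = 0"
  shows "\<not> abs_mono_at (Pa a) (den a 3) 0"
proof
  assume am: "abs_mono_at (Pa a) (den a 3) 0"
  have apos: "0 < a" using assms(1) by simp
  have "(deriv ^^ 20) (ratfun (Pa a) (den a 3)) 0 = phi a 20 0" by (rule iter_Pa[OF assms(3)]) simp
  also have "\<dots> = phi a (Suc 19) 0" by simp
  also have "\<dots> = a^20 * fact 20 * G a 20 1" using phi_Suc[of a 0 19] by simp
  finally have e: "(deriv ^^ 20) (ratfun (Pa a) (den a 3)) 0 = a^20 * fact 20 * G a 20 1" .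
  have "G a 20 1 = cc a 1 + 21 * cc a 2 + 231 * cc a 3" by (simp add: G_def)
  then have "G a 20 1 < 0" using a2_facts[OF assms(1,2)] by simp
  then have "a^20 * fact 20 * G a 20 1 < 0" using apos by (simp add: mult_pos_neg)
  then show False using am e unfolding abs_mono_at_def by (metis not_le)
qed

lemma G10_ident:
  fixes c1 c2 c3 u :: real assumes "u > 0"
  shows "u^2 * (c1 + c2 * 11 * (1/u) + c3 * 66 * (1/u)^2) = c1 * u^2 + 11 * c2 * u + 66 * c3"
proof -
  have a1: "u^2*(c2*11*(1/u)) = 11*c2*u" using assms by (simp add: power2_eq_square)
  have a2: "u^2*(c3*66*(1/u)^2) = 66*c3" using assms by (simp add: power2_eq_square)
  have "u^2 * (c1 + c2 * 11 * (1/u) + c3 * 66 * (1/u)^2) = u^2*c1 + u^2*(c2*11*(1/u)) + u^2*(c3*66*(1/u)^2)"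
    by (simp only: distrib_left)
  also have "\<dots> = c1 * u^2 + 11 * c2 * u + 66 * c3" unfolding a1 a2 by (simp only: mult.commute)
  finally show ?thesis .
qed

lemma am_a3:
  assumes "1068578/10^6 \<le> a" "a \<le> 1068580/10^6" "cub a = 0"
  shows "\<not> abs_mono_at (Pa a) (den a 3) (-1)"
proof
  assume am: "abs_mono_at (Pa a) (den a 3) (-1)"
  have apos: "0 < a" using assms(1) by simp
  have u: "1 - a * (-1) > 0" using apos by simp
  have "(deriv ^^ 10) (ratfun (Pa a) (den a 3)) (-1) = phi a 10 (-1)"
    by (rule iter_Pa[OF assms(3)]) (use apos in simp)
  also have "\<dots> = phi a (Suc 9) (-1)" by simp
  also have "\<dots> = a^10 * fact 10 * (1/(1+a))^11 * G a 10 (1/(1+a))" using phi_Suc[OF u, of 9] by simp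
  finally have e: "(deriv ^^ 10) (ratfun (Pa a) (den a 3)) (-1) = a^10 * fact 10 * (1/(1+a))^11 * G a 10 (1/(1+a))" .
  have g: "G a 10 (1/(1+a)) = cc a 1 + cc a 2 * 11 * (1/(1+a)) + cc a 3 * 66 * (1/(1+a))^2"
    by (simp add: G_def)
  have "(1+a)^2 * G a 10 (1/(1+a)) = cc a 1 * (1+a)^2 + 11 * cc a 2 * (1+a) + 66 * cc a 3"
    unfolding g by (rule G10_ident) (use apos in simp)
  then have "(1+a)^2 * G a 10 (1/(1+a)) < 0" using a3_facts[OF assms] by simp
  then have "G a 10 (1/(1+a)) < 0" using apos by (simp add: mult_less_0_iff)
  then have "a^10 * fact 10 * (1/(1+a))^11 * G a 10 (1/(1+a)) < 0"
    using apos by (intro mult_pos_neg) simp_all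
  then show False using am e unfolding abs_mono_at_def by (metis not_le)
qed

theorem mainTheorem17:
  fixes xs :: real
  assumes "xs^9 + 12*xs^8 + 60*xs^7 + 120*xs^6 - 144*xs^5 - 1152*xs^4 - 1536*xs^3
           + 1152*xs^2 + 2304*xs - 1536 = 0"
    and "\<forall>y::real. y^9 + 12*y^8 + 60*y^7 + 120*y^6 - 144*y^5 - 1152*y^4 - 1536*y^3
           + 1152*y^2 + 2304*y - 1536 = 0 \<longrightarrow> xs \<le> y"
  shows "R_hat 3 4 = ereal (- xs)"
proof -
  have Nxs: "NN xs = 0" using assms(1) by (simp add: NN_def)
  have Nmin: "\<And>y. NN y = 0 \<Longrightarrow> xs \<le> y" using assms(2) by (simp add: NN_def)
  obtain a1 where a1: "128886/10^6 \<le> a1" "a1 \<le> 128887/10^6" "cub a1 = 0" using a1_ex by blast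
  obtain a2 where a2: "302534/10^6 \<le> a2" "a2 \<le> 302535/10^6" "cub a2 = 0" using a2_ex by blast
  have a12: "a1 \<noteq> a2" using a1 a2 by auto
  note f1 = a1_facts[OF a1]
  have "\<exists>x. -329/100 \<le> x \<and> x \<le> -328/100 \<and> poly (Pa a1) x = 0"
    by (rule IVT) (use f1 in auto)
  then obtain xi where xi: "-329/100 \<le> xi" "xi \<le> -328/100" "poly (Pa a1) xi = 0" by blast
  have Nxi: "NN xi = 0" by (rule NN_root[OF a1(3) xi(3)])
  have le1: "xs \<le> xi" using Nmin[OF Nxi] .
  have gt: "-329/100 < xs"
  proof (rule ccontr)
    assume "\<not> -329/100 < xs"
    then have "NN xs < 0" using NN_neg by simp
    then show False using Nxs by simp
  qed
  have xs_xi: "xs = xi"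
  proof (rule ccontr)
    assume "xs \<noteq> xi"
    then have "xs < xi" using le1 by simp
    then have "NN xs < NN xi" using NN_mono[of xs xi] gt xi by simp
    then show False using Nxs Nxi by simp
  qed
  have rad1: "radius_am (Pa a1) (den a1 3) = ereal (-xi)"
  proof (rule radius_eq)
    show "xi \<le> 0" using xi by simp
    show "\<And>x. xi \<le> x \<Longrightarrow> x \<le> 0 \<Longrightarrow> abs_mono_at (Pa a1) (den a1 3) x"
      by (rule am_a1_pos[OF a1 xi(3) xi(1)])
    show "\<And>x. x < xi \<Longrightarrow> \<not> abs_mono_at (Pa a1) (den a1 3) x"
      by (rule am_a1_neg[OF a1 xi(3) xi(1)])
  qed
  have mem1: "(Pa a1, a1) \<in> Pi_hat 3 4" using Pi_hat_char a1(3) by simp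
  have "R_hat 3 4 = ereal (-xi)"
    unfolding R_hat_def
  proof (rule Sup_eqI)
    fix y assume "y \<in> (\<lambda>(P, a). radius_am P (den a 3)) ` Pi_hat 3 4"
    then obtain P a where Pa: "(P, a) \<in> Pi_hat 3 4" and y: "y = radius_am P (den a 3)" by auto
    from Pa have c: "cub a = 0" and P: "P = Pa a" using Pi_hat_char by auto
    have "a = a1 \<or> a = a2 \<or> a = 3/2 - a1 - a2" by (rule roots3[OF c a1(3) a2(3) a12])
    then show "y \<le> ereal (-xi)"
    proof (elim disjE)
      assume "a = a1" then show ?thesis using y P rad1 by simp
    next
      assume e: "a = a2"
      have "y \<le> ereal (- 0)" unfolding y P e by (rule radius_le) (use am_a2[OF a2] in auto)
      then show ?thesis using xi by (simp add: order_trans)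
    next
      assume e: "a = 3/2 - a1 - a2"
      have b: "1068578/10^6 \<le> a" "a \<le> 1068580/10^6" using a1 a2 e by auto
      have "y \<le> ereal (- (-1))" unfolding y P by (rule radius_le) (use am_a3[OF b c] in auto)
      then show ?thesis using xi by (simp add: order_trans)
    qed
  next
    fix y assume ub: "\<And>z. z \<in> (\<lambda>(P, a). radius_am P (den a 3)) ` Pi_hat 3 4 \<Longrightarrow> z \<le> y"
    have "radius_am (Pa a1) (den a1 3) \<in> (\<lambda>(P, a). radius_am P (den a 3)) ` Pi_hat 3 4"
      using mem1 by force
    then show "ereal (-xi) \<le> y" using ub rad1 by metis
  qed
  then show ?thesis using xs_xi by simp
qed

end
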